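(* Let $\mathsf{P}$ be a stratified program of $\mathcal{H}$. Then its well-founded Herbrand interpretation $\mathcal{M}_\mathsf{P}$ (the Herbrand interpretation whose valuation function is the well-founded model of $\mathsf{Gr(P)}$) is extensional.
   Context: Types of $\mathcal{H}$: base types $\iota$ and $o$; predicate types $\pi::=o\mid\rho\to\pi$; argument types $\rho::=\iota\mid\pi$; every predicate type has the form $\rho_1\to\cdots\to\rho_n\to o$. Terms are built from predicate/individual variables and constants and function symbols (of types $\iota^n\to\iota$) by typed application; atoms are terms of type $o$; literals are atoms, equalities $(\mathsf{E}_1\approx\mathsf{E}_2)$ between terms of type $\iota$, and negated atoms $\sim\mathsf{E}$. A clause is $\mathsf{p}\,\mathsf{V}_1\cdots\mathsf{V}_n\leftarrow\mathsf{L}_1,\dots,\mathsf{L}_m$ with $\mathsf{p}$ a predicate constant of type $\rho_1\to\cdots\to\rho_n\to o$, $\mathsf{V}_i$ distinct variables of types $\rho_i$, $\mathsf{L}_j$ literals; a program is a finite set of clauses. Stratified: a predicate type $\pi$ is greater than $\pi'$ if $\pi=\rho_1\to\cdots\to\rho_n\to\pi'$ with $n\ge1$. $\mathsf{P}$ is stratified if the set of predicate constants appearing in $\mathsf{P}$ can be partitioned into finitely many sets $S_1,\dots,S_r$ (with $\mathit{stratum}(\mathsf{r})=i$ iff $\mathsf{r}\in S_i$) such that for every clause $\mathsf{H}\leftarrow\mathsf{A}_1,\dots,\mathsf{A}_m,\sim\mathsf{B}_1,\dots,\sim\mathsf{B}_n$ of $\mathsf{P}$ whose head has predicate constant $\mathsf{p}$: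 (1) if $\mathsf{A}_i$ is a term starting with a predicate constant $\mathsf{q}$, then $\mathit{stratum}(\mathsf{q})\le\mathit{stratum}(\mathsf{p})$; (2) if $\mathsf{A}_i$ is a term starting with a predicate variable $\mathsf{Q}$, then $\mathit{stratum}(\mathsf{q})\le\mathit{stratum}(\mathsf{p})$ for every predicate constant $\mathsf{q}$ of $\mathsf{P}$ whose type is greater than or equal to the type of $\mathsf{Q}$; (3) if $\mathsf{B}_i$ starts with a predicate constant $\mathsf{q}$, then $\mathit{stratum}(\mathsf{q})<\mathit{stratum}(\mathsf{p})$; (4) if $\mathsf{B}_i$ starts with a predicate variable $\mathsf{Q}$, then $\mathit{stratum}(\mathsf{q})<\mathit{stratum}(\mathsf{p})$ for every predicate constant $\mathsf{q}$ of $\mathsf{P}$ whose type is greater than or equal to the type of $\mathsf{Q}$. Semantics: $U_{\mathsf{P},\rho}$ is the set of ground terms of type $\rho$ built from the symbols of $\mathsf{P}$; $\mathsf{Gr(P)}$ is the set of all clauses obtained from clauses of $\mathsf{P}$ by substituting for each variable an element of $U_{\mathsf{P},\rho}$ of its type, regarded as a propositional program on the ground atoms (ground equalities being the constants true/false according to syntactic identity). $\mathcal{M}_\mathsf{P}$ is the Herbrand interpretation of $\mathsf{P}$ (symbols interpreted by themselves, application syntactic) whose valuation $v$ gives each ground atom its truth value ($\mathit{false},0,\mathit{true}$) in the well-founded model of $\mathsf{Gr(P)}$. Extensional equality: for argument type $\rho$, $\cong_{v,\rho}$ on $U_{\mathsf{P},\rho}$ is defined by: for $\rho=\iota$, syntactic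 equality; for $\rho=o$, $d\cong d'$ iff $v(d)=v(d')$; for $\rho=\rho'\to\pi$, $d\cong d'$ iff $(d\,e)\cong_{v,\pi}(d'\,e')$ for all $e,e'\in U_{\mathsf{P},\rho'}$ with $e\cong_{v,\rho'}e'$. An interpretation with valuation $v$ is extensional if $\cong_{v,\rho}$ is reflexive for every argument type $\rho$. *)

theory Defs
  imports Main
begin

text \<open>Raw types: base types iota (Iota) and o (Bool), and arrows.  The raw datatype also
  contains the types iota^n -> iota of function symbols.\<close>
datatype ty = Iota | Bool | Fn ty ty

fun pred_ty :: "ty \<Rightarrow> bool" where
  "pred_ty Bool = True"
| "pred_ty (Fn r p) = ((r = Iota \<or> pred_ty r) \<and> pred_ty p)"
| "pred_ty Iota = False"

definition arg_ty :: "ty \<Rightarrow> bool" where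
  "arg_ty t = (t = Iota \<or> pred_ty t)"

fun ifun :: "nat \<Rightarrow> ty" where
  "ifun 0 = Iota"
| "ifun (Suc n) = Fn Iota (ifun n)"

definition const_ty :: "ty \<Rightarrow> bool" where
  "const_ty t = (arg_ty t \<or> (\<exists>n. n \<ge> 1 \<and> t = ifun n))"

fun ty_ge :: "ty \<Rightarrow> ty \<Rightarrow> bool" where
  "ty_ge (Fn a b) t' = (Fn a b = t' \<or> ty_ge b t')"
| "ty_ge t t' = (t = t')"

datatype trm = TVar string ty | TCon string ty | TApp trm trm

fun ty_of :: "trm \<Rightarrow> ty option" where
  "ty_of (TVar x t) = (if arg_ty t then Some t else None)"
| "ty_of (TCon c t) = (if const_ty t then Some t else None)"
| "ty_of (TApp s u) = (case (ty_of s, ty_of u) of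
      (Some (Fn a b), Some a') \<Rightarrow> (if a = a' then Some b else None)
    | _ \<Rightarrow> None)"

fun vars_trm :: "trm \<Rightarrow> (string \<times> ty) set" where
  "vars_trm (TVar x t) = {(x, t)}"
| "vars_trm (TCon c t) = {}"
| "vars_trm (TApp s u) = vars_trm s \<union> vars_trm u"

fun consts_trm :: "trm \<Rightarrow> (string \<times> ty) set" where
  "consts_trm (TVar x t) = {}"
| "consts_trm (TCon c t) = {(c, t)}"
| "consts_trm (TApp s u) = consts_trm s \<union> consts_trm u"

fun hd_sym :: "trm \<Rightarrow> trm" where
  "hd_sym (TApp s u) = hd_sym s"
| "hd_sym t = t"

fun subst :: "((string \<times> ty) \<Rightarrow> trm) \<Rightarrow> trm \<Rightarrow> trm" where
  "subst \<sigma> (TVar x t) = \<sigma> (x, t)"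
| "subst \<sigma> (TCon c t) = TCon c t"
| "subst \<sigma> (TApp s u) = TApp (subst \<sigma> s) (subst \<sigma> u)"

datatype lit = Pos trm | Eq trm trm | Neg trm

fun lit_trms :: "lit \<Rightarrow> trm set" where
  "lit_trms (Pos a) = {a}"
| "lit_trms (Eq s t) = {s, t}"
| "lit_trms (Neg a) = {a}"

fun subst_lit :: "((string \<times> ty) \<Rightarrow> trm) \<Rightarrow> lit \<Rightarrow> lit" where
  "subst_lit \<sigma> (Pos a) = Pos (subst \<sigma> a)"
| "subst_lit \<sigma> (Eq s t) = Eq (subst \<sigma> s) (subst \<sigma> t)"
| "subst_lit \<sigma> (Neg a) = Neg (subst \<sigma> a)"

fun wf_lit :: "lit \<Rightarrow> bool" where
  "wf_lit (Pos a) = (ty_of a = Some Bool)"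
| "wf_lit (Eq s t) = (ty_of s = Some Iota \<and> ty_of t = Some Iota)"
| "wf_lit (Neg a) = (ty_of a = Some Bool)"

text \<open>A clause  p V1 ... Vn <- L1, ..., Lm : head predicate constant, head variables,
  body literals.\<close>
datatype clause = Clause "string \<times> ty" "(string \<times> ty) list" "lit list"

fun clause_head :: "clause \<Rightarrow> trm" where
  "clause_head (Clause p vs body) =
     foldl TApp (TCon (fst p) (snd p)) (map (\<lambda>(x, t). TVar x t) vs)"

fun clause_body :: "clause \<Rightarrow> lit list" where
  "clause_body (Clause p vs body) = body"

fun clause_pred :: "clause \<Rightarrow> string \<times> ty" where
  "clause_pred (Clause p vs body) = p"

fun wf_clause :: "clause \<Rightarrow> bool" where
  "wf_clause (Clause p vs body) =
     (pred_ty (snd p) \<and> snd p = foldr Fn (map snd vs) Bool \<and> distinct vs \<and>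
      (\<forall>l \<in> set body. wf_lit l))"

definition vars_clause :: "clause \<Rightarrow> (string \<times> ty) set" where
  "vars_clause c = vars_trm (clause_head c) \<union>
     (\<Union>l \<in> set (clause_body c). \<Union>t \<in> lit_trms l. vars_trm t)"

definition consts_clause :: "clause \<Rightarrow> (string \<times> ty) set" where
  "consts_clause c = consts_trm (clause_head c) \<union>
     (\<Union>l \<in> set (clause_body c). \<Union>t \<in> lit_trms l. consts_trm t)"

definition wf_program :: "clause set \<Rightarrow> bool" where
  "wf_program P = (finite P \<and> (\<forall>c \<in> P. wf_clause c))"

definition consts_prog :: "clause set \<Rightarrow> (string \<times> ty) set" where
  "consts_prog P = (\<Union>c \<in> P. consts_clause c)"

definition pconsts :: "clause set \<Rightarrow> (string \<times> ty) set" where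
  "pconsts P = {q \<in> consts_prog P. pred_ty (snd q)}"

text \<open>The partition S_1,...,S_r of the (finitely many) predicate constants of P is
  represented by the stratum function st.\<close>
definition stratified :: "clause set \<Rightarrow> bool" where
  "stratified P = (\<exists>st :: string \<times> ty \<Rightarrow> nat. \<forall>c \<in> P. \<forall>l \<in> set (clause_body c).
     (case l of
        Pos a \<Rightarrow> (case hd_sym a of
            TCon q tq \<Rightarrow> st (q, tq) \<le> st (clause_pred c)
          | TVar Q tQ \<Rightarrow> (\<forall>q \<in> pconsts P. ty_ge (snd q) tQ \<longrightarrow> st q \<le> st (clause_pred c))
          | TApp _ _ \<Rightarrow> True)
      | Neg a \<Rightarrow> (case hd_sym a of
            TCon q tq \<Rightarrow> st (q, tq) < st (clause_pred c)
          | TVar Q tQ \<Rightarrow> (\<forall>q \<in> pconsts P. ty_ge (snd q) tQ \<longrightarrow> st q < st (clause_pred c))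
          | TApp _ _ \<Rightarrow> True)
      | Eq _ _ \<Rightarrow> True))"

definition U :: "clause set \<Rightarrow> ty \<Rightarrow> trm set" where
  "U P t = {d. ty_of d = Some t \<and> vars_trm d = {} \<and> consts_trm d \<subseteq> consts_prog P}"

text \<open>Gr(P), as pairs (ground head atom, ground body literals).\<close>
definition gr :: "clause set \<Rightarrow> (trm \<times> lit list) set" where
  "gr P = {(subst \<sigma> (clause_head c), map (subst_lit \<sigma>) (clause_body c)) | c \<sigma>.
             c \<in> P \<and> (\<forall>(x, t) \<in> vars_clause c. \<sigma> (x, t) \<in> U P t)}"

fun lit_holds :: "trm set \<Rightarrow> trm set \<Rightarrow> lit \<Rightarrow> bool" where
  "lit_holds Iset J (Pos a) = (a \<in> Iset)"
| "lit_holds Iset J (Eq s t) = (s = t)"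
| "lit_holds Iset J (Neg a) = (a \<notin> J)"

text \<open>Gelfond-Lifschitz style operator: least model of the reduct of Gr(P) w.r.t. J.\<close>
definition Gamma :: "clause set \<Rightarrow> trm set \<Rightarrow> trm set" where
  "Gamma P J = lfp (\<lambda>Iset. {h. \<exists>body. (h, body) \<in> gr P \<and> (\<forall>l \<in> set body. lit_holds Iset J l)})"

text \<open>Well-founded model via the alternating fixpoint (Van Gelder).\<close>
definition wf_true :: "clause set \<Rightarrow> trm set" where
  "wf_true P = lfp (\<lambda>J. Gamma P (Gamma P J))"

definition wf_not_false :: "clause set \<Rightarrow> trm set" where
  "wf_not_false P = Gamma P (wf_true P)"

datatype tv = FF | UU | TT

definition wf_val :: "clause set \<Rightarrow> trm \<Rightarrow> tv" where
  "wf_val P a = (if a \<in> wf_true P then TT else if a \<in> wf_not_false P then UU else FF)"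

fun ext_eq :: "clause set \<Rightarrow> (trm \<Rightarrow> tv) \<Rightarrow> ty \<Rightarrow> trm \<Rightarrow> trm \<Rightarrow> bool" where
  "ext_eq P v Iota d d' = (d = d')"
| "ext_eq P v Bool d d' = (v d = v d')"
| "ext_eq P v (Fn a b) d d' =
     (\<forall>e \<in> U P a. \<forall>e' \<in> U P a. ext_eq P v a e e' \<longrightarrow> ext_eq P v b (TApp d e) (TApp d' e'))"

definition extensional :: "clause set \<Rightarrow> (trm \<Rightarrow> tv) \<Rightarrow> bool" where
  "extensional P v = (\<forall>\<rho>. arg_ty \<rho> \<longrightarrow> (\<forall>d \<in> U P \<rho>. ext_eq P v \<rho> d d))"

end

theory Submission imports Defs begin

lemma ty_ge_refl[simp]: "ty_ge t t"
  by (cases t) auto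

lemma ty_ge_Fn: "ty_ge x (Fn a b) \<Longrightarrow> ty_ge x b"
  by (induction x) auto

lemma ty_ge_trans: "ty_ge a b \<Longrightarrow> ty_ge b c \<Longrightarrow> ty_ge a c"
  by (induction a arbitrary: b) auto

lemma ty_of_TApp: "ty_of (TApp s u) = Some \<tau> \<longleftrightarrow> (\<exists>a. ty_of s = Some (Fn a \<tau>) \<and> ty_of u = Some a)"
  by (auto split: option.splits ty.splits if_splits)

declare ty_of.simps(3)[simp del] ty_of_TApp[simp]

lemma hd_ty: "ty_of t = Some \<tau> \<Longrightarrow> \<exists>th. ty_of (hd_sym t) = Some th \<and> ty_ge th \<tau>"
proof (induction t arbitrary: \<tau>)
  case (TApp s u)
  then obtain a where "ty_of s = Some (Fn a \<tau>)" by (auto simp: ty_of_TApp)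
  with TApp.IH(1) show ?case by (auto dest: ty_ge_Fn)
qed auto

lemma ty_ge_ifun_Bool: "\<not> ty_ge (ifun n) Bool"
  by (induction n) auto

lemma const_ty_pred: "const_ty t \<Longrightarrow> ty_ge t Bool \<Longrightarrow> pred_ty t"
  using ty_ge_ifun_Bool by (auto simp: const_ty_def arg_ty_def)

lemma hd_sym_not_App: "hd_sym t \<noteq> TApp a b"
  by (induction t) auto

lemma hd_sym_subst: "hd_sym (subst \<sigma> E) = (case hd_sym E of TVar x t \<Rightarrow> hd_sym (\<sigma> (x, t)) | h \<Rightarrow> h)"
  by (induction E) (auto split: trm.splits)

lemma hd_sym_var: "hd_sym E = TVar x t \<Longrightarrow> (x, t) \<in> vars_trm E"
  by (induction E) auto

lemma hd_sym_con: "hd_sym E = TCon x t \<Longrightarrow> (x, t) \<in> consts_trm E"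
  by (induction E) auto

lemma U_App: "d \<in> U P (Fn a b) \<Longrightarrow> e \<in> U P a \<Longrightarrow> TApp d e \<in> U P b"
  by (auto simp: U_def)

lemma U_AppD: "TApp d e \<in> U P b \<Longrightarrow> \<exists>a. d \<in> U P (Fn a b) \<and> e \<in> U P a"
  by (auto simp: U_def ty_of_TApp)

lemma U_hd: "t \<in> U P \<tau> \<Longrightarrow> \<exists>q tq. hd_sym t = TCon q tq \<and> (q, tq) \<in> consts_prog P \<and> ty_ge tq \<tau> \<and> const_ty tq"
proof -
  assume t: "t \<in> U P \<tau>"
  then have "ty_of t = Some \<tau>" by (simp add: U_def)
  then obtain th where th: "ty_of (hd_sym t) = Some th" "ty_ge th \<tau>"
    using hd_ty by blast
  show ?thesis
  proof (cases "hd_sym t")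
    case (TVar x tt) then show ?thesis using hd_sym_var[OF TVar] t by (auto simp: U_def)
  next
    case (TCon q tq) then show ?thesis using hd_sym_con[OF TCon] t th
      by (auto simp: U_def split: if_splits)
  next
    case (TApp a b) then show ?thesis using hd_sym_not_App by blast
  qed
qed

lemma subst_U:
  assumes "consts_trm E \<subseteq> consts_prog P" "\<forall>v\<in>vars_trm E. \<sigma> v \<in> U P (snd v)" "ty_of E = Some \<tau>"
  shows "subst \<sigma> E \<in> U P \<tau>"
  using assms
proof (induction E arbitrary: \<tau>)
  case (TVar x t) then show ?case by (auto split: if_splits)
next
  case (TCon c t) then show ?case by (auto simp: U_def split: if_splits)
next
  case (TApp s u)
  then obtain a where "ty_of s = Some (Fn a \<tau>)" "ty_of u = Some a" by (auto simp: ty_of_TApp)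
  with TApp show ?case by (auto intro!: U_App)
qed

lemma hd_sym_foldl: "hd_sym (foldl TApp h xs) = hd_sym h"
  by (induction xs arbitrary: h) auto

lemma subst_foldl: "subst \<sigma> (foldl TApp h xs) = foldl TApp (subst \<sigma> h) (map (subst \<sigma>) xs)"
  by (induction xs arbitrary: h) auto

lemma foldl_TApp_inj: "foldl TApp (TCon a ta) xs = foldl TApp (TCon b tb) ys \<Longrightarrow> a = b \<and> ta = tb \<and> xs = ys"
proof (induction xs arbitrary: ys rule: rev_induct)
  case Nil then show ?case by (cases ys rule: rev_exhaust) auto
next
  case (snoc x xs) then show ?case by (cases ys rule: rev_exhaust) auto
qed

lemma foldr_Fn_inj: "foldr Fn xs Bool = foldr Fn ys Bool \<Longrightarrow> xs = ys"
  by (induction xs arbitrary: ys) (case_tac ys; auto)+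

lemma pred_ty_foldr: "pred_ty t \<Longrightarrow> \<exists>ts. t = foldr Fn ts Bool"
proof (induction t)
  case (Fn a b) then obtain ts where "b = foldr Fn ts Bool" by auto
  then show ?case by (rule_tac x="a#ts" in exI) auto
qed (auto intro: exI[of _ "[]"])

definition Phi :: "clause set \<Rightarrow> trm set \<Rightarrow> trm set \<Rightarrow> trm set" where
  "Phi P J I = {h. \<exists>body. (h, body) \<in> gr P \<and> (\<forall>l\<in>set body. lit_holds I J l)}"

lemma Gamma_Phi: "Gamma P J = lfp (Phi P J)"
  by (simp add: Gamma_def Phi_def[abs_def])

lemma lit_holds_mono: "I \<subseteq> I' \<Longrightarrow> lit_holds I J l \<Longrightarrow> lit_holds I' J l"
  by (cases l) auto

lemma lit_holds_anti: "J \<subseteq> J' \<Longrightarrow> lit_holds I J' l \<Longrightarrow> lit_holds I J l"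
  by (cases l) auto

lemma mono_Phi: "mono (Phi P J)"
  unfolding mono_def Phi_def using lit_holds_mono by blast

lemma Phi_anti: "J \<subseteq> J' \<Longrightarrow> Phi P J' I \<subseteq> Phi P J I"
  unfolding Phi_def using lit_holds_anti by blast

lemma Gamma_anti: "J \<subseteq> J' \<Longrightarrow> Gamma P J' \<subseteq> Gamma P J"
  unfolding Gamma_Phi by (rule lfp_mono) (use Phi_anti in auto)

lemma mono_GG: "mono (\<lambda>J. Gamma P (Gamma P J))"
  by (rule monoI) (intro Gamma_anti)

lemma Gamma_unfold: "Gamma P J = Phi P J (Gamma P J)"
  unfolding Gamma_Phi by (rule lfp_unfold[OF mono_Phi])

definition lev :: "(string \<times> ty \<Rightarrow> nat) \<Rightarrow> trm \<Rightarrow> nat" where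
  "lev st t = (case hd_sym t of TCon q tq \<Rightarrow> st (q, tq) | _ \<Rightarrow> 0)"

definition strat_ok :: "clause set \<Rightarrow> (string \<times> ty \<Rightarrow> nat) \<Rightarrow> bool" where
  "strat_ok P st = (\<forall>c \<in> P. \<forall>l \<in> set (clause_body c).
     (case l of
        Pos a \<Rightarrow> (case hd_sym a of
            TCon q tq \<Rightarrow> st (q, tq) \<le> st (clause_pred c)
          | TVar Q tQ \<Rightarrow> (\<forall>q \<in> pconsts P. ty_ge (snd q) tQ \<longrightarrow> st q \<le> st (clause_pred c))
          | TApp _ _ \<Rightarrow> True)
      | Neg a \<Rightarrow> (case hd_sym a of
            TCon q tq \<Rightarrow> st (q, tq) < st (clause_pred c)
          | TVar Q tQ \<Rightarrow> (\<forall>q \<in> pconsts P. ty_ge (snd q) tQ \<longrightarrow> st q < st (clause_pred c))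
          | TApp _ _ \<Rightarrow> True)
      | Eq _ _ \<Rightarrow> True))"

lemma stratified_ok: "stratified P \<Longrightarrow> \<exists>st. strat_ok P st"
  by (simp add: stratified_def strat_ok_def)

lemma lev_subst_le:
  assumes E: "ty_of E = Some Bool" and cs: "consts_trm E \<subseteq> consts_prog P" and vars: "\<forall>v\<in>vars_trm E. \<sigma> v \<in> U P (snd v)"
  shows "\<exists>q. q \<in> pconsts P \<and> hd_sym (subst \<sigma> E) = TCon (fst q) (snd q) \<and> lev st (subst \<sigma> E) = st q \<and>
     (case hd_sym E of TCon c tc \<Rightarrow> q = (c, tc) | TVar Q tQ \<Rightarrow> ty_ge (snd q) tQ | _ \<Rightarrow> False)"
proof (cases "hd_sym E")
  case (TVar Q tQ)
  have Qv: "(Q, tQ) \<in> vars_trm E" using hd_sym_var[OF TVar] .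
  then have "\<sigma> (Q, tQ) \<in> U P tQ" using vars by auto
  from U_hd[OF this] obtain q tq where q: "hd_sym (\<sigma> (Q, tQ)) = TCon q tq" "(q, tq) \<in> consts_prog P"
     "ty_ge tq tQ" "const_ty tq" by blast
  from hd_ty[OF E] TVar obtain th where "ty_of (TVar Q tQ) = Some th" "ty_ge th Bool" by auto
  then have "ty_ge tQ Bool" by (auto split: if_splits)
  with q have "pred_ty tq" using const_ty_pred ty_ge_trans by blast
  with q have "(q, tq) \<in> pconsts P" by (simp add: pconsts_def)
  then show ?thesis using q TVar by (rule_tac x="(q,tq)" in exI) (simp add: hd_sym_subst lev_def)
next
  case (TCon c tc)
  have "(c, tc) \<in> consts_trm E" using hd_sym_con[OF TCon] .
  from hd_ty[OF E] TCon obtain th where th: "ty_of (TCon c tc) = Some th" "ty_ge th Bool" by auto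
  then have "const_ty tc" "ty_ge tc Bool" by (auto split: if_splits)
  then have "pred_ty tc" using const_ty_pred by blast
  with \<open>(c, tc) \<in> consts_trm E\<close> cs have "(c, tc) \<in> pconsts P" by (auto simp: pconsts_def)
  then show ?thesis using TCon by (rule_tac x="(c,tc)" in exI) (simp add: hd_sym_subst lev_def)
next
  case (TApp a b) then show ?thesis using hd_sym_not_App by blast
qed

lemma gr_elim:
  assumes "(h, body) \<in> gr P"
  obtains p vs b0 \<sigma> where "Clause p vs b0 \<in> P" "\<forall>v\<in>vars_clause (Clause p vs b0). \<sigma> v \<in> U P (snd v)"
    "h = foldl TApp (TCon (fst p) (snd p)) (map \<sigma> vs)" "body = map (subst_lit \<sigma>) b0"
proof -
  from assms obtain c \<sigma> where c: "c \<in> P" "\<forall>(x, t) \<in> vars_clause c. \<sigma> (x, t) \<in> U P t"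
    "h = subst \<sigma> (clause_head c)" "body = map (subst_lit \<sigma>) (clause_body c)"
    unfolding gr_def by blast
  obtain p vs b0 where cc: "c = Clause p vs b0" by (cases c)
  have m: "map (subst \<sigma>) (map (\<lambda>(x, t). TVar x t) vs) = map \<sigma> vs"
    by (auto simp: split_def)
  have h: "h = foldl TApp (TCon (fst p) (snd p)) (map \<sigma> vs)"
    using c(3) cc by (simp only: clause_head.simps subst_foldl m subst.simps)
  have v: "\<forall>v\<in>vars_clause (Clause p vs b0). \<sigma> v \<in> U P (snd v)" using c(2) cc by auto
  show ?thesis using that[OF _ v h] c cc by auto
qed

lemma clause_lit_facts:
  assumes "Clause p vs b0 \<in> P" "l \<in> set b0" "t \<in> lit_trms l"
  shows "consts_trm t \<subseteq> consts_prog P" "vars_trm t \<subseteq> vars_clause (Clause p vs b0)"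
  using assms by (auto simp: consts_prog_def consts_clause_def vars_clause_def)

lemma lev_head: "lev st (foldl TApp (TCon (fst p) (snd p)) xs) = st p"
  by (simp add: lev_def hd_sym_foldl)

lemma strat_clause:
  assumes "strat_ok P st" "Clause p vs b0 \<in> P" "L \<in> set b0"
  shows "case L of Pos a \<Rightarrow> (case hd_sym a of
            TCon q tq \<Rightarrow> st (q, tq) \<le> st p
          | TVar Q tQ \<Rightarrow> (\<forall>q \<in> pconsts P. ty_ge (snd q) tQ \<longrightarrow> st q \<le> st p)
          | TApp _ _ \<Rightarrow> True)
      | Neg a \<Rightarrow> (case hd_sym a of
            TCon q tq \<Rightarrow> st (q, tq) < st p
          | TVar Q tQ \<Rightarrow> (\<forall>q \<in> pconsts P. ty_ge (snd q) tQ \<longrightarrow> st q < st p)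
          | TApp _ _ \<Rightarrow> True)
      | Eq _ _ \<Rightarrow> True"
proof -
  have H: "\<forall>l \<in> set b0. case l of Pos a \<Rightarrow> (case hd_sym a of
            TCon q tq \<Rightarrow> st (q, tq) \<le> st p
          | TVar Q tQ \<Rightarrow> (\<forall>q \<in> pconsts P. ty_ge (snd q) tQ \<longrightarrow> st q \<le> st p)
          | TApp _ _ \<Rightarrow> True)
      | Neg a \<Rightarrow> (case hd_sym a of
            TCon q tq \<Rightarrow> st (q, tq) < st p
          | TVar Q tQ \<Rightarrow> (\<forall>q \<in> pconsts P. ty_ge (snd q) tQ \<longrightarrow> st q < st p)
          | TApp _ _ \<Rightarrow> True)
      | Eq _ _ \<Rightarrow> True"
    using bspec[OF assms(1)[unfolded strat_ok_def] assms(2)] unfolding clause_pred.simps clause_body.simps .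
  show ?thesis using bspec[OF H assms(3)] .
qed

lemma gr_lev:
  assumes wf: "wf_program P" and sok: "strat_ok P st" and g: "(h, body) \<in> gr P"
  shows "Pos a \<in> set body \<Longrightarrow> lev st a \<le> lev st h" and "Neg a \<in> set body \<Longrightarrow> lev st a < lev st h"
proof -
  obtain p vs b0 \<sigma> where c: "Clause p vs b0 \<in> P" "\<forall>v\<in>vars_clause (Clause p vs b0). \<sigma> v \<in> U P (snd v)"
    "h = foldl TApp (TCon (fst p) (snd p)) (map \<sigma> vs)" "body = map (subst_lit \<sigma>) b0"
    using gr_elim[OF g] by blast
  have lh: "lev st h = st p" using c(3) lev_head by simp
  have wfc: "wf_clause (Clause p vs b0)" using wf c(1) unfolding wf_program_def by blast
  have key: "lev st (subst \<sigma> E) \<le> st p \<and> (Neg E \<in> set b0 \<longrightarrow> lev st (subst \<sigma> E) < st p)"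
    if l: "L \<in> set b0" "L = Pos E \<or> L = Neg E" for L E
  proof -
    have "E \<in> lit_trms L" using l by auto
    note f = clause_lit_facts[OF c(1) l(1) this]
    have tyE: "ty_of E = Some Bool" using wfc l by auto
    have vE: "\<forall>v\<in>vars_trm E. \<sigma> v \<in> U P (snd v)" using f(2) c(2) by blast
    obtain q where q: "q \<in> pconsts P" "lev st (subst \<sigma> E) = st q"
      "(case hd_sym E of TCon c tc \<Rightarrow> q = (c, tc) | TVar Q tQ \<Rightarrow> ty_ge (snd q) tQ | _ \<Rightarrow> False)"
      using lev_subst_le[OF tyE f(1) vE, of st] by blast
    have s: "case L of Pos a \<Rightarrow> (case hd_sym a of
            TCon q tq \<Rightarrow> st (q, tq) \<le> st p
          | TVar Q tQ \<Rightarrow> (\<forall>q \<in> pconsts P. ty_ge (snd q) tQ \<longrightarrow> st q \<le> st p)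
          | TApp _ _ \<Rightarrow> True)
      | Neg a \<Rightarrow> (case hd_sym a of
            TCon q tq \<Rightarrow> st (q, tq) < st p
          | TVar Q tQ \<Rightarrow> (\<forall>q \<in> pconsts P. ty_ge (snd q) tQ \<longrightarrow> st q < st p)
          | TApp _ _ \<Rightarrow> True)
      | Eq _ _ \<Rightarrow> True"
      using strat_clause[OF sok c(1) l(1)] .
    have nb: "Neg E \<in> set b0 \<Longrightarrow> Pos E \<notin> set b0 \<or> True" by simp
    show ?thesis
    proof (cases "hd_sym E")
      case (TVar Q tQ)
      then have "ty_ge (snd q) tQ" using q by simp
      moreover have "(\<forall>q \<in> pconsts P. ty_ge (snd q) tQ \<longrightarrow> st q < st p)" if "Neg E \<in> set b0"
        using strat_clause[OF sok c(1) that] TVar by simp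
      moreover have "(\<forall>q \<in> pconsts P. ty_ge (snd q) tQ \<longrightarrow> st q \<le> st p)"
        using l(2)
      proof
        assume "L = Pos E" then show ?thesis using s TVar by simp
      next
        assume "L = Neg E" then show ?thesis using s TVar by (simp add: less_imp_le)
      qed
      ultimately show ?thesis using q by auto
    next
      case (TCon c tc)
      then have "q = (c, tc)" using q by simp
      moreover have "st (c, tc) < st p" if "Neg E \<in> set b0"
        using strat_clause[OF sok c(1) that] TCon by simp
      moreover have "st (c, tc) \<le> st p"
        using s l TCon by auto
      ultimately show ?thesis using q by auto
    next
      case (TApp x y) then show ?thesis using hd_sym_not_App by blast
    qed
  qed
  show "Pos a \<in> set body \<Longrightarrow> lev st a \<le> lev st h"
  proof -
    assume "Pos a \<in> set body"
    then obtain L where "L \<in> set b0" "subst_lit \<sigma> L = Pos a" using c(4) by auto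
    moreover from \<open>subst_lit \<sigma> L = Pos a\<close> obtain E where "L = Pos E" "a = subst \<sigma> E" by (cases L) auto
    ultimately show ?thesis using key[OF \<open>L \<in> set b0\<close>] lh by auto
  qed
  show "Neg a \<in> set body \<Longrightarrow> lev st a < lev st h"
  proof -
    assume "Neg a \<in> set body"
    then obtain L where "L \<in> set b0" "subst_lit \<sigma> L = Neg a" using c(4) by auto
    moreover from \<open>subst_lit \<sigma> L = Neg a\<close> obtain E where "L = Neg E" "a = subst \<sigma> E" by (cases L) auto
    ultimately show ?thesis using key[OF \<open>L \<in> set b0\<close>] lh by auto
  qed
qed

lemma Gamma_local:
  assumes wf: "wf_program P" and sok: "strat_ok P st"
    and agree: "\<forall>a. lev st a < s \<longrightarrow> (a \<in> J \<longleftrightarrow> a \<in> J')"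
  shows "Gamma P J \<inter> {a. lev st a \<le> s} \<subseteq> Gamma P J'"
proof -
  let ?S = "{a. lev st a \<le> s \<longrightarrow> a \<in> Gamma P J'}"
  have "lfp (Phi P J) \<le> ?S"
  proof (rule lfp_induct[OF mono_Phi])
    show "Phi P J (inf (lfp (Phi P J)) ?S) \<le> ?S"
    proof
      fix h assume "h \<in> Phi P J (inf (lfp (Phi P J)) ?S)"
      then obtain body where hb: "(h, body) \<in> gr P" "\<forall>l\<in>set body. lit_holds (lfp (Phi P J) \<inter> ?S) J l"
        unfolding Phi_def by auto
      show "h \<in> ?S"
      proof (rule CollectI, rule impI)
        assume hs: "lev st h \<le> s"
        have "\<forall>l\<in>set body. lit_holds (Gamma P J') J' l"
        proof
          fix l assume l: "l \<in> set body"
          show "lit_holds (Gamma P J') J' l"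
          proof (cases l)
            case (Pos a)
            then have "lev st a \<le> s" using gr_lev(1)[OF wf sok hb(1)] l hs by fastforce
            then show ?thesis using hb(2) l Pos by auto
          next
            case (Neg a)
            then have "lev st a < s" using gr_lev(2)[OF wf sok hb(1)] l hs by fastforce
            then show ?thesis using hb(2) l Neg agree by auto
          next
            case (Eq x y) then show ?thesis using hb(2) l by auto
          qed
        qed
        then have "h \<in> Phi P J' (Gamma P J')" using hb(1) unfolding Phi_def by auto
        then show "h \<in> Gamma P J'" using Gamma_unfold by blast
      qed
    qed
  qed
  then show ?thesis unfolding Gamma_Phi by auto
qed

lemma total:
  assumes wf: "wf_program P" and sok: "strat_ok P st"
  shows "wf_not_false P = wf_true P"
proof -
  let ?T = "wf_true P" and ?F = "wf_not_false P"
  have T: "?T = Gamma P ?F"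
    unfolding wf_not_false_def wf_true_def by (rule lfp_unfold[OF mono_GG])
  have F: "?F = Gamma P ?T" by (simp add: wf_not_false_def)
  have "\<forall>a. lev st a \<le> s \<longrightarrow> (a \<in> ?T \<longleftrightarrow> a \<in> ?F)" for s
  proof (induction s rule: less_induct)
    case (less s)
    then have ag: "\<forall>a. lev st a < s \<longrightarrow> (a \<in> ?T \<longleftrightarrow> a \<in> ?F)" by blast
    have 1: "Gamma P ?T \<inter> {a. lev st a \<le> s} \<subseteq> Gamma P ?F"
      by (rule Gamma_local[OF wf sok]) (use ag in blast)
    have 2: "Gamma P ?F \<inter> {a. lev st a \<le> s} \<subseteq> Gamma P ?T"
      by (rule Gamma_local[OF wf sok]) (use ag in blast)
    show ?case using 1 2 T F by blast
  qed
  then show ?thesis by blast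
qed

section \<open>Step-indexed logical relation\<close>

declare split_paired_All[simp del] split_paired_Ex[simp del]

definition lexle :: "nat \<times> nat \<Rightarrow> nat \<times> nat \<Rightarrow> bool" where
  "lexle b a = (fst b < fst a \<or> (fst b = fst a \<and> snd b \<le> snd a))"

lemma lexle_refl[simp]: "lexle a a"
  by (simp add: lexle_def)

lemma lexle_trans: "lexle a b \<Longrightarrow> lexle b c \<Longrightarrow> lexle a c"
  by (auto simp: lexle_def)

fun Rel :: "clause set \<Rightarrow> (nat \<times> nat \<Rightarrow> trm set) \<Rightarrow> trm set \<Rightarrow> nat \<times> nat \<Rightarrow> ty \<Rightarrow> trm \<Rightarrow> trm \<Rightarrow> bool" where
  "Rel P CC M \<alpha> Iota d d' = (d = d')"
| "Rel P CC M \<alpha> Bool d d' = ((d \<in> CC \<alpha> \<longrightarrow> d' \<in> M) \<and> (d' \<in> CC \<alpha> \<longrightarrow> d \<in> M))"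
| "Rel P CC M \<alpha> (Fn a b) d d' = (\<forall>\<beta>. lexle \<beta> \<alpha> \<longrightarrow> (\<forall>e\<in>U P a. \<forall>e'\<in>U P a.
      Rel P CC M \<beta> a e e' \<longrightarrow> Rel P CC M \<beta> b (TApp d e) (TApp d' e')))"

lemma Rel_sym: "Rel P CC M \<alpha> \<tau> d d' \<Longrightarrow> Rel P CC M \<alpha> \<tau> d' d"
proof (induction \<tau> arbitrary: \<alpha> d d')
  case (Fn a b)
  show ?case
  proof (simp, intro allI impI ballI)
    fix \<beta> e e' assume "lexle \<beta> \<alpha>" "e \<in> U P a" "e' \<in> U P a" "Rel P CC M \<beta> a e e'"
    have "Rel P CC M \<beta> a e' e" using Fn.IH(1) \<open>Rel P CC M \<beta> a e e'\<close> by blast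
    then have "Rel P CC M \<beta> b (TApp d e') (TApp d' e)"
      using Fn.prems \<open>lexle \<beta> \<alpha>\<close> \<open>e \<in> U P a\<close> \<open>e' \<in> U P a\<close> by auto
    then show "Rel P CC M \<beta> b (TApp d' e) (TApp d e')"
      using Fn.IH(2) by blast
  qed
qed auto

lemma Rel_down:
  assumes mono: "\<And>a b. lexle b a \<Longrightarrow> CC b \<subseteq> CC a"
  shows "lexle \<beta> \<alpha> \<Longrightarrow> Rel P CC M \<alpha> \<tau> d d' \<Longrightarrow> Rel P CC M \<beta> \<tau> d d'"
proof (induction \<tau> arbitrary: \<alpha> \<beta> d d')
  case Bool then show ?case using mono[OF Bool(1)] by auto
next
  case (Fn a b)
  show ?case
  proof (simp only: Rel.simps, intro allI impI ballI)
    fix \<gamma> e e' assume g: "lexle \<gamma> \<beta>" "e \<in> U P a" "e' \<in> U P a" "Rel P CC M \<gamma> a e e'"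
    have "lexle \<gamma> \<alpha>" using g(1) Fn.prems(1) by (rule lexle_trans)
    then show "Rel P CC M \<gamma> b (TApp d e) (TApp d' e')" using Fn.prems(2) g by auto
  qed
qed auto

fun RL :: "clause set \<Rightarrow> (nat \<times> nat \<Rightarrow> trm set) \<Rightarrow> trm set \<Rightarrow> nat \<times> nat \<Rightarrow> ty list \<Rightarrow> trm list \<Rightarrow> trm list \<Rightarrow> bool" where
  "RL P CC M \<alpha> [] [] [] = True"
| "RL P CC M \<alpha> (t#ts) (x#xs) (y#ys) = (x \<in> U P t \<and> y \<in> U P t \<and> Rel P CC M \<alpha> t x y \<and> RL P CC M \<alpha> ts xs ys)"
| "RL P CC M \<alpha> _ _ _ = False"

lemma RL_sym: "RL P CC M \<alpha> ts xs ys \<Longrightarrow> RL P CC M \<alpha> ts ys xs"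
  by (induction P CC M \<alpha> ts xs ys rule: RL.induct) (auto intro: Rel_sym)

lemma RL_down:
  assumes mono: "\<And>a b. lexle b a \<Longrightarrow> CC b \<subseteq> CC a"
  shows "lexle \<beta> \<alpha> \<Longrightarrow> RL P CC M \<alpha> ts xs ys \<Longrightarrow> RL P CC M \<beta> ts xs ys"
proof (induction ts arbitrary: xs ys)
  case Nil then show ?case by (cases xs; cases ys) auto
next
  case (Cons t ts) then show ?case
    by (cases xs; cases ys) (auto intro: Rel_down[OF mono])
qed

lemma RL_nth: "RL P CC M \<alpha> ts xs ys \<Longrightarrow> length xs = length ts \<and> length ys = length ts \<and>
   (\<forall>i < length ts. xs!i \<in> U P (ts!i) \<and> ys!i \<in> U P (ts!i) \<and> Rel P CC M \<alpha> (ts!i) (xs!i) (ys!i))"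
proof (induction P CC M \<alpha> ts xs ys rule: RL.induct)
  case (2 P CC M \<alpha> t ts x xs y ys)
  then show ?case by (auto simp: nth_Cons split: nat.splits)
qed auto

lemma fold_intro:
  assumes mono: "\<And>a b. lexle b a \<Longrightarrow> CC b \<subseteq> CC a"
  shows "(\<forall>\<gamma>. lexle \<gamma> \<alpha> \<longrightarrow> (\<forall>xs ys. RL P CC M \<gamma> ts xs ys \<longrightarrow>
            Rel P CC M \<gamma> Bool (foldl TApp d xs) (foldl TApp d' ys)))
         \<Longrightarrow> Rel P CC M \<alpha> (foldr Fn ts Bool) d d'"
proof (induction ts arbitrary: \<alpha> d d')
  case Nil
  then show ?case by (metis RL.simps(1) foldl_Nil foldr_Nil id_apply lexle_refl)
next
  case (Cons t ts)
  show ?case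
  proof (simp only: foldr_Cons o_apply Rel.simps, intro allI impI ballI)
    fix \<beta> e e' assume b: "lexle \<beta> \<alpha>" "e \<in> U P t" "e' \<in> U P t" "Rel P CC M \<beta> t e e'"
    show "Rel P CC M \<beta> (foldr Fn ts Bool) (TApp d e) (TApp d' e')"
    proof (rule Cons.IH, intro allI impI)
      fix \<gamma> xs ys assume g: "lexle \<gamma> \<beta>" "RL P CC M \<gamma> ts xs ys"
      have "RL P CC M \<gamma> (t#ts) (e#xs) (e'#ys)"
        using g b Rel_down[OF mono] by auto
      then show "Rel P CC M \<gamma> Bool (foldl TApp (TApp d e) xs) (foldl TApp (TApp d' e') ys)"
        using Cons.prems g(1) b(1) lexle_trans by fastforce
    qed
  qed
qed

lemma fold_elim:
  "Rel P CC M \<alpha> (foldr Fn ts Bool) d d' \<Longrightarrow> RL P CC M \<alpha> ts xs ys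
   \<Longrightarrow> Rel P CC M \<alpha> Bool (foldl TApp d xs) (foldl TApp d' ys)"
proof (induction ts arbitrary: d d' xs ys)
  case Nil then show ?case by (cases xs; cases ys) auto
next
  case (Cons t ts)
  then obtain x xs1 y ys1 where xy: "xs = x#xs1" "ys = y#ys1" by (cases xs; cases ys) auto
  with Cons.prems have "Rel P CC M \<alpha> (foldr Fn ts Bool) (TApp d x) (TApp d' y)" "RL P CC M \<alpha> ts xs1 ys1"
    by auto
  then show ?case using Cons.IH xy by simp
qed

lemma Rel_ifun: "Rel P CC M \<alpha> (ifun n) d d"
  by (induction n arbitrary: \<alpha> d) auto

lemma Rel_subst:
  assumes "ty_of E = Some \<tau>" "consts_trm E \<subseteq> consts_prog P"
    "\<forall>v\<in>vars_trm E. \<sigma> v \<in> U P (snd v) \<and> \<sigma>' v \<in> U P (snd v) \<and> Rel P CC M \<beta> (snd v) (\<sigma> v) (\<sigma>' v)"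
    "\<forall>\<tau> t. t \<in> U P \<tau> \<longrightarrow> Rel P CC M \<beta> \<tau> t t"
  shows "Rel P CC M \<beta> \<tau> (subst \<sigma> E) (subst \<sigma>' E)"
  using assms
proof (induction E arbitrary: \<tau>)
  case (TVar x t) then show ?case by (auto split: if_splits)
next
  case (TCon c t)
  then have "TCon c t \<in> U P \<tau>" by (auto simp: U_def split: if_splits)
  then show ?case using TCon by auto
next
  case (TApp s u)
  then obtain a where a: "ty_of s = Some (Fn a \<tau>)" "ty_of u = Some a" by auto
  have "Rel P CC M \<beta> (Fn a \<tau>) (subst \<sigma> s) (subst \<sigma>' s)" "Rel P CC M \<beta> a (subst \<sigma> u) (subst \<sigma>' u)"
    using TApp a by auto
  moreover have "subst \<sigma> u \<in> U P a" "subst \<sigma>' u \<in> U P a"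
    using TApp.prems a by (auto intro!: subst_U)
  ultimately show ?case by auto
qed

lemma gr_intro:
  assumes "Clause p vs b0 \<in> P" "\<forall>v\<in>vars_clause (Clause p vs b0). \<sigma> v \<in> U P (snd v)"
  shows "(foldl TApp (TCon (fst p) (snd p)) (map \<sigma> vs), map (subst_lit \<sigma>) b0) \<in> gr P"
proof -
  have m: "map (subst \<sigma>) (map (\<lambda>(x, t). TVar x t) vs) = map \<sigma> vs"
    by (auto simp: split_def)
  have "subst \<sigma> (clause_head (Clause p vs b0)) = foldl TApp (TCon (fst p) (snd p)) (map \<sigma> vs)"
    by (simp only: clause_head.simps subst_foldl m subst.simps)
  moreover have "\<forall>(x, t) \<in> vars_clause (Clause p vs b0). \<sigma> (x, t) \<in> U P t" using assms(2) by auto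
  ultimately show ?thesis using assms(1) unfolding gr_def
    by (intro CollectI exI[of _ "Clause p vs b0"] exI[of _ \<sigma>]) auto
qed

lemma body_finite:
  fixes K :: "nat \<Rightarrow> trm set"
  assumes "\<And>j j'. j \<le> j' \<Longrightarrow> K j \<subseteq> K j'"
  shows "\<forall>l\<in>set body. lit_holds (\<Union>j. K j) J l \<Longrightarrow> \<exists>j. \<forall>l\<in>set body. lit_holds (K j) J l"
proof (induction body)
  case Nil then show ?case by simp
next
  case (Cons l body)
  then obtain j where j: "\<forall>l\<in>set body. lit_holds (K j) J l" by auto
  obtain i where i: "lit_holds (K i) J l"
    using Cons.prems by (cases l) auto
  have "lit_holds (K (max i j)) J l" by (meson i assms lit_holds_mono max.cobounded1)
  moreover have "\<forall>l\<in>set body. lit_holds (K (max i j)) J l"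
    by (meson j assms lit_holds_mono max.cobounded2)
  ultimately have "\<forall>l\<in>set (l#body). lit_holds (K (max i j)) J l" by auto
  then show ?case by blast
qed

context
  fixes P :: "clause set" and st :: "string \<times> ty \<Rightarrow> nat"
  assumes wf: "wf_program P" and sok: "strat_ok P st"
begin

abbreviation MM where "MM \<equiv> wf_true P"

definition KK :: "nat \<Rightarrow> trm set" where "KK j = (Phi P MM ^^ j) {}"

definition CC :: "nat \<times> nat \<Rightarrow> trm set" where
  "CC \<alpha> = {a \<in> MM. lev st a < fst \<alpha>} \<union> {a \<in> KK (snd \<alpha>). lev st a = fst \<alpha>}"

lemma M_fix: "Phi P MM MM = MM"
proof -
  have "Gamma P MM = MM" using total[OF wf sok] by (simp add: wf_not_false_def)
  then show ?thesis using Gamma_unfold[of P MM] by simp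
qed

lemma M_lfp: "MM = lfp (Phi P MM)"
proof -
  have "Gamma P MM = MM" using total[OF wf sok] by (simp add: wf_not_false_def)
  then show ?thesis by (simp add: Gamma_Phi)
qed

lemma KK_Suc: "KK (Suc j) = Phi P MM (KK j)"
  by (simp add: KK_def)

lemma KK_sub: "KK j \<subseteq> MM"
proof (induction j)
  case 0 then show ?case by (simp add: KK_def)
next
  case (Suc j)
  then have "Phi P MM (KK j) \<subseteq> Phi P MM MM" using mono_Phi by (rule monoD[rotated])
  then show ?case using M_fix KK_Suc by simp
qed

lemma KK_mono_Suc: "KK j \<subseteq> KK (Suc j)"
proof (induction j)
  case 0 then show ?case by (simp add: KK_def)
next
  case (Suc j)
  then show ?case using mono_Phi KK_Suc by (metis monoD)
qed

lemma KK_mono: "j \<le> j' \<Longrightarrow> KK j \<subseteq> KK j'"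
  by (rule lift_Suc_mono_le[of KK]) (use KK_mono_Suc in auto)

lemma M_in_KK: "a \<in> MM \<Longrightarrow> \<exists>j. a \<in> KK j"
proof -
  have "lfp (Phi P MM) \<subseteq> (\<Union>j. KK j)"
  proof (rule lfp_lowerbound, rule subsetI)
    fix h assume "h \<in> Phi P MM (\<Union>j. KK j)"
    then obtain body where b: "(h, body) \<in> gr P" "\<forall>l\<in>set body. lit_holds (\<Union>j. KK j) MM l"
      unfolding Phi_def by auto
    then obtain j where "\<forall>l\<in>set body. lit_holds (KK j) MM l"
      using body_finite[of KK, OF KK_mono] by blast
    then have "h \<in> KK (Suc j)" using b(1) unfolding KK_Suc Phi_def by auto
    then show "h \<in> (\<Union>j. KK j)" by blast
  qed
  then show "a \<in> MM \<Longrightarrow> \<exists>j. a \<in> KK j" using M_lfp by auto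
qed

lemma CC_mono: "lexle b a \<Longrightarrow> CC b \<subseteq> CC a"
  unfolding CC_def lexle_def using KK_sub KK_mono by fastforce

definition Fund :: "nat \<times> nat \<Rightarrow> bool" where
  "Fund \<alpha> = (\<forall>\<tau> t. t \<in> U P \<tau> \<longrightarrow> Rel P CC MM \<alpha> \<tau> t t)"

lemma con_U: "pred_ty tc \<Longrightarrow> (c, tc) \<in> consts_prog P \<Longrightarrow> TCon c tc \<in> U P tc"
  by (auto simp: U_def const_ty_def arg_ty_def)

lemma not_pred_const: "const_ty t \<Longrightarrow> \<not> pred_ty t \<Longrightarrow> \<exists>n. t = ifun n"
  by (auto simp: const_ty_def arg_ty_def intro: exI[of _ 0])

lemma Fund_intro:
  assumes H: "\<And>c tc ts \<gamma> xs ys. (c, tc) \<in> consts_prog P \<Longrightarrow> pred_ty tc \<Longrightarrow> tc = foldr Fn ts Bool \<Longrightarrow>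
     lexle \<gamma> \<alpha> \<Longrightarrow> RL P CC MM \<gamma> ts xs ys \<Longrightarrow>
     Rel P CC MM \<gamma> Bool (foldl TApp (TCon c tc) xs) (foldl TApp (TCon c tc) ys)"
  shows "Fund \<alpha>"
proof -
  have "t \<in> U P \<tau> \<Longrightarrow> Rel P CC MM \<alpha> \<tau> t t" for t \<tau>
  proof (induction t arbitrary: \<tau>)
    case (TVar x t) then show ?case by (auto simp: U_def)
  next
    case (TCon c tc)
    then have tc: "\<tau> = tc" "const_ty tc" "(c, tc) \<in> consts_prog P" by (auto simp: U_def split: if_splits)
    show ?case
    proof (cases "pred_ty tc")
      case True
      then obtain ts where ts: "tc = foldr Fn ts Bool" using pred_ty_foldr by blast
      show ?thesis unfolding tc(1) ts
        by (rule fold_intro[OF CC_mono]) (use H tc True ts in auto)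
    next
      case False
      then obtain n where "tc = ifun n" using not_pred_const tc by blast
      then show ?thesis using tc Rel_ifun by simp
    qed
  next
    case (TApp t1 t2)
    then obtain a where a: "t1 \<in> U P (Fn a \<tau>)" "t2 \<in> U P a" using U_AppD by blast
    then have "Rel P CC MM \<alpha> (Fn a \<tau>) t1 t1" "Rel P CC MM \<alpha> a t2 t2" using TApp.IH(1)[OF a(1)] TApp.IH(2)[OF a(2)] by auto
    then have "\<forall>\<beta>. lexle \<beta> \<alpha> \<longrightarrow> (\<forall>e\<in>U P a. \<forall>e'\<in>U P a.
      Rel P CC MM \<beta> a e e' \<longrightarrow> Rel P CC MM \<beta> \<tau> (TApp t1 e) (TApp t1 e'))" "Rel P CC MM \<alpha> a t2 t2"
      by (simp_all only: Rel.simps)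
    then show ?case using a(2) lexle_refl by blast
  qed
  then show ?thesis unfolding Fund_def by blast
qed


lemma lev_fold: "lev st (foldl TApp (TCon c tc) xs) = st (c, tc)"
  by (simp add: lev_def hd_sym_foldl)

lemma step:
  assumes IH: "\<And>\<beta>. lexle \<beta> (s, j) \<Longrightarrow> \<beta> \<noteq> (s, j) \<Longrightarrow> Fund \<beta>"
    and c: "(c, tc) \<in> consts_prog P" "pred_ty tc" "tc = foldr Fn ts Bool"
    and rl: "RL P CC MM (s, j) ts xs ys"
    and a: "foldl TApp (TCon c tc) xs \<in> CC (s, j)"
  shows "foldl TApp (TCon c tc) ys \<in> MM"
proof -
  let ?a = "foldl TApp (TCon c tc) xs" and ?a' = "foldl TApp (TCon c tc) ys"
  from a consider (low) "?a \<in> MM" "st (c, tc) < s" | (cur) "?a \<in> KK j" "st (c, tc) = s"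
    unfolding CC_def using lev_fold[of c tc] by auto
  then show ?thesis
  proof cases
    case low
    obtain i where i: "?a \<in> KK i" using M_in_KK low(1) by blast
    let ?\<beta> = "(st (c, tc), i)"
    have lb: "lexle ?\<beta> (s, j)" "?\<beta> \<noteq> (s, j)" using low(2) by (auto simp: lexle_def)
    then have "Fund ?\<beta>" using IH by blast
    then have "Rel P CC MM ?\<beta> tc (TCon c tc) (TCon c tc)" using con_U[OF c(2,1)] unfolding Fund_def by blast
    moreover have "RL P CC MM ?\<beta> ts xs ys" using RL_down[OF CC_mono lb(1) rl] .
    ultimately have "Rel P CC MM ?\<beta> Bool ?a ?a'" using fold_elim c(3) by blast
    moreover have "?a \<in> CC ?\<beta>" using i lev_fold[of c tc] unfolding CC_def by auto
    ultimately show ?thesis by simp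
  next
    case cur
    then obtain j' where j: "j = Suc j'" by (cases j) (auto simp: KK_def)
    from cur(1) obtain body where hb: "(?a, body) \<in> gr P" "\<forall>l\<in>set body. lit_holds (KK j') MM l"
      unfolding j KK_Suc Phi_def by auto
    obtain p vs b0 \<sigma> where cl: "Clause p vs b0 \<in> P" "\<forall>v\<in>vars_clause (Clause p vs b0). \<sigma> v \<in> U P (snd v)"
      "?a = foldl TApp (TCon (fst p) (snd p)) (map \<sigma> vs)" "body = map (subst_lit \<sigma>) b0"
      using gr_elim[OF hb(1)] by blast
    have pc: "fst p = c" "snd p = tc" "map \<sigma> vs = xs" using foldl_TApp_inj[OF cl(3)[symmetric]] by auto
    have wfc: "wf_clause (Clause p vs b0)" using wf cl(1) unfolding wf_program_def by blast
    then have tsv: "ts = map snd vs" using pc c(3) foldr_Fn_inj by auto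
    have dv: "distinct vs" using wfc by simp
    have wfl: "\<forall>l\<in>set b0. wf_lit l" using wfc by simp
    have rn: "length xs = length ts" "length ys = length ts"
      "\<And>i. i < length ts \<Longrightarrow> xs!i \<in> U P (ts!i) \<and> ys!i \<in> U P (ts!i) \<and> Rel P CC MM (s, j) (ts!i) (xs!i) (ys!i)"
      using RL_nth[OF rl] by auto
    define \<sigma>' where "\<sigma>' v = (case map_of (zip vs ys) v of Some e \<Rightarrow> e | None \<Rightarrow> \<sigma> v)" for v
    have lvs: "length vs = length ys" using rn tsv by simp
    have s'in: "\<sigma>' (vs!i) = ys!i" if "i < length vs" for i
      unfolding \<sigma>'_def using map_of_zip_nth[OF lvs dv] that lvs by simp
    have s'out: "\<sigma>' v = \<sigma> v" if "v \<notin> set vs" for v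
    proof -
      have "map_of (zip vs ys) v = None" using that lvs by simp
      then show ?thesis unfolding \<sigma>'_def by simp
    qed
    have sin: "\<sigma> (vs!i) = xs!i" if "i < length vs" for i
      using pc(3) that by auto
    have mys: "map \<sigma>' vs = ys" by (rule nth_equalityI) (use lvs s'in in auto)
    let ?\<beta> = "(s, j')"
    have lb: "lexle ?\<beta> (s, j)" "?\<beta> \<noteq> (s, j)" using j by (auto simp: lexle_def)
    have fb: "Fund ?\<beta>" using IH lb by blast
    have vr: "\<forall>v\<in>vars_clause (Clause p vs b0). \<sigma> v \<in> U P (snd v) \<and> \<sigma>' v \<in> U P (snd v) \<and>
        Rel P CC MM ?\<beta> (snd v) (\<sigma> v) (\<sigma>' v)"
    proof
      fix v assume v: "v \<in> vars_clause (Clause p vs b0)"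
      show "\<sigma> v \<in> U P (snd v) \<and> \<sigma>' v \<in> U P (snd v) \<and> Rel P CC MM ?\<beta> (snd v) (\<sigma> v) (\<sigma>' v)"
      proof (cases "v \<in> set vs")
        case True
        then obtain i where i: "i < length vs" "v = vs!i" by (auto simp: in_set_conv_nth)
        then have "ts!i = snd v" using tsv by simp
        moreover have "i < length ts" using i tsv by simp
        ultimately show ?thesis using rn(3)[of i] i sin s'in Rel_down[OF CC_mono lb(1)] by auto
      next
        case False
        then have "\<sigma>' v = \<sigma> v" by (rule s'out)
        then show ?thesis using cl(2) v fb unfolding Fund_def by auto
      qed
    qed
    have vr': "\<forall>v\<in>vars_clause (Clause p vs b0). \<sigma>' v \<in> U P (snd v)" using vr by blast
    have gr': "(?a', map (subst_lit \<sigma>') b0) \<in> gr P"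
      using gr_intro[OF cl(1) vr'] pc mys by simp
    have levs: "lev st ?a = s" "lev st ?a' = s" using cur(2) lev_fold by auto
    have relE: "Rel P CC MM ?\<beta> \<tau> (subst \<sigma> E) (subst \<sigma>' E)"
      if "L \<in> set b0" "E \<in> lit_trms L" "ty_of E = Some \<tau>" for L E \<tau>
    proof (rule Rel_subst)
      show "ty_of E = Some \<tau>" by fact
      show "consts_trm E \<subseteq> consts_prog P" using clause_lit_facts[OF cl(1) that(1,2)] by blast
      show "\<forall>v\<in>vars_trm E. \<sigma> v \<in> U P (snd v) \<and> \<sigma>' v \<in> U P (snd v) \<and> Rel P CC MM ?\<beta> (snd v) (\<sigma> v) (\<sigma>' v)"
        using clause_lit_facts[OF cl(1) that(1,2)] vr by blast
      show "\<forall>\<tau> t. t \<in> U P \<tau> \<longrightarrow> Rel P CC MM ?\<beta> \<tau> t t" using fb unfolding Fund_def .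
    qed
    have "\<forall>l\<in>set (map (subst_lit \<sigma>') b0). lit_holds MM MM l"
    proof
      fix l assume "l \<in> set (map (subst_lit \<sigma>') b0)"
      then obtain L where L: "L \<in> set b0" "l = subst_lit \<sigma>' L" by auto
      have hL: "lit_holds (KK j') MM (subst_lit \<sigma> L)" using hb(2) cl(4) L(1) by auto
      show "lit_holds MM MM l"
      proof (cases L)
        case (Pos E)
        have tyE: "ty_of E = Some Bool" using wfl L(1) Pos by auto
        have R: "Rel P CC MM ?\<beta> Bool (subst \<sigma> E) (subst \<sigma>' E)" using relE[OF L(1) _ tyE] Pos by simp
        have inK: "subst \<sigma> E \<in> KK j'" using hL Pos by simp
        have "Pos (subst \<sigma> E) \<in> set body" using cl(4) L(1) Pos by force
        then have "lev st (subst \<sigma> E) \<le> s" using gr_lev(1)[OF wf sok hb(1)] levs by fastforce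
        then have "subst \<sigma> E \<in> CC ?\<beta>" using inK KK_sub unfolding CC_def by fastforce
        then show ?thesis using R L(2) Pos by simp
      next
        case (Neg E)
        have tyE: "ty_of E = Some Bool" using wfl L(1) Neg by auto
        have R: "Rel P CC MM ?\<beta> Bool (subst \<sigma> E) (subst \<sigma>' E)" using relE[OF L(1) _ tyE] Neg by simp
        have nM: "subst \<sigma> E \<notin> MM" using hL Neg by simp
        have "Neg (subst \<sigma>' E) \<in> set (map (subst_lit \<sigma>') b0)" using L(1) Neg by force
        then have "lev st (subst \<sigma>' E) < s" using gr_lev(2)[OF wf sok gr'] levs by fastforce
        then have "subst \<sigma>' E \<notin> MM" using R nM unfolding CC_def by auto
        then show ?thesis using L(2) Neg by simp
      next
        case (Eq x y)
        have ty: "ty_of x = Some Iota" "ty_of y = Some Iota" using wfl L(1) Eq by auto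
        have "subst \<sigma> x = subst \<sigma>' x" "subst \<sigma> y = subst \<sigma>' y"
          using relE[OF L(1) _ ty(1)] relE[OF L(1) _ ty(2)] Eq by auto
        then show ?thesis using hL L(2) Eq by simp
      qed
    qed
    then have "?a' \<in> Phi P MM MM" using gr' unfolding Phi_def by blast
    then show ?thesis using M_fix by simp
  qed
qed


lemma Fund_all: "Fund (s, j)"
proof (induction s arbitrary: j rule: less_induct)
  case (less s)
  note outer = less.IH
  show ?case
  proof (induction j rule: less_induct)
    case (less j)
    have IH: "Fund \<beta>" if "lexle \<beta> (s, j)" "\<beta> \<noteq> (s, j)" for \<beta>
    proof (cases \<beta>)
      case (Pair s' j')
      then show ?thesis using that outer less.IH by (auto simp: lexle_def)
    qed
    show "Fund (s, j)"
    proof (rule Fund_intro)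
      fix c tc ts \<gamma> xs ys
      assume h: "(c, tc) \<in> consts_prog P" "pred_ty tc" "tc = foldr Fn ts Bool" "lexle \<gamma> (s, j)"
        "RL P CC MM \<gamma> ts xs ys"
      show "Rel P CC MM \<gamma> Bool (foldl TApp (TCon c tc) xs) (foldl TApp (TCon c tc) ys)"
      proof (cases "\<gamma> = (s, j)")
        case True
        have "foldl TApp (TCon c tc) xs \<in> CC (s, j) \<Longrightarrow> foldl TApp (TCon c tc) ys \<in> MM"
          using step[OF IH h(1-3)] h(5) True by blast
        moreover have "foldl TApp (TCon c tc) ys \<in> CC (s, j) \<Longrightarrow> foldl TApp (TCon c tc) xs \<in> MM"
          using step[OF IH h(1-3) RL_sym] h(5) True by blast
        ultimately show ?thesis using True by simp
      next
        case False
        then have "Fund \<gamma>" using IH h(4) by blast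
        then have "Rel P CC MM \<gamma> tc (TCon c tc) (TCon c tc)" using con_U[OF h(2,1)] unfolding Fund_def by blast
        then show ?thesis using fold_elim h(3,5) by blast
      qed
    qed
  qed
qed

lemma fund: "t \<in> U P \<tau> \<Longrightarrow> Rel P CC MM \<alpha> \<tau> t t"
  using Fund_all[of "fst \<alpha>" "snd \<alpha>"] unfolding Fund_def by simp

lemma vv_M: "wf_val P a = (if a \<in> MM then TT else FF)"
  using total[OF wf sok] by (simp add: wf_val_def)

lemma final:
  "(\<forall>d d'. d \<in> U P \<tau> \<longrightarrow> d' \<in> U P \<tau> \<longrightarrow> (\<forall>\<alpha>. Rel P CC MM \<alpha> \<tau> d d') \<longrightarrow> ext_eq P (wf_val P) \<tau> d d') \<and>
   (\<forall>\<alpha> x y x' y'. x \<in> U P \<tau> \<longrightarrow> y \<in> U P \<tau> \<longrightarrow> x' \<in> U P \<tau> \<longrightarrow> y' \<in> U P \<tau> \<longrightarrow>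
      Rel P CC MM \<alpha> \<tau> x y \<longrightarrow> Rel P CC MM \<alpha> \<tau> x' y' \<longrightarrow>
      ext_eq P (wf_val P) \<tau> x x' \<longrightarrow> ext_eq P (wf_val P) \<tau> y y' \<longrightarrow> Rel P CC MM \<alpha> \<tau> x y')"
proof (induction \<tau>)
  case Iota then show ?case by simp
next
  case Bool
  have A: "ext_eq P (wf_val P) Bool d d'" if "\<forall>\<alpha>. Rel P CC MM \<alpha> Bool d d'" for d d'
  proof -
    have "d \<in> MM \<longleftrightarrow> d' \<in> MM"
    proof
      assume "d \<in> MM"
      then obtain i where "d \<in> KK i" using M_in_KK by blast
      then have "d \<in> CC (lev st d, i)" unfolding CC_def by auto
      then show "d' \<in> MM" using that by auto
    next
      assume "d' \<in> MM"
      then obtain i where "d' \<in> KK i" using M_in_KK by blast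
      then have "d' \<in> CC (lev st d', i)" unfolding CC_def by auto
      then show "d \<in> MM" using that by auto
    qed
    then show ?thesis by (simp add: vv_M)
  qed
  have B: "Rel P CC MM \<alpha> Bool x y'" if "Rel P CC MM \<alpha> Bool x y" "Rel P CC MM \<alpha> Bool x' y'"
     "ext_eq P (wf_val P) Bool x x'" "ext_eq P (wf_val P) Bool y y'" for \<alpha> x y x' y'
  proof -
    have "x \<in> MM \<longleftrightarrow> x' \<in> MM" "y \<in> MM \<longleftrightarrow> y' \<in> MM" using that(3,4) by (auto simp: vv_M split: if_splits)
    moreover have "CC \<alpha> \<subseteq> MM" unfolding CC_def using KK_sub by auto
    ultimately show ?thesis using that(1,2) by auto
  qed
  show ?case using A B by blast
next
  case (Fn a b)
  have refl_a: "ext_eq P (wf_val P) a e e" if "e \<in> U P a" for e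
    using Fn.IH(1) that fund by blast
  have rel_a: "Rel P CC MM \<alpha> a e e'" if "e \<in> U P a" "e' \<in> U P a" "ext_eq P (wf_val P) a e e'" for \<alpha> e e'
    using Fn.IH(1) that fund[of e a \<alpha>] fund[of e' a \<alpha>] by blast
  have A: "ext_eq P (wf_val P) (Fn a b) d d'"
    if d: "d \<in> U P (Fn a b)" "d' \<in> U P (Fn a b)" "\<forall>\<alpha>. Rel P CC MM \<alpha> (Fn a b) d d'" for d d'
  proof (simp only: ext_eq.simps, intro ballI impI)
    fix e e' assume e: "e \<in> U P a" "e' \<in> U P a" "ext_eq P (wf_val P) a e e'"
    have "\<forall>\<alpha>. Rel P CC MM \<alpha> b (TApp d e) (TApp d' e')"
    proof
      fix \<alpha>
      have "Rel P CC MM \<alpha> (Fn a b) d d'" using d(3) by blast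
      then have "\<forall>\<beta>. lexle \<beta> \<alpha> \<longrightarrow> (\<forall>e\<in>U P a. \<forall>e'\<in>U P a.
        Rel P CC MM \<beta> a e e' \<longrightarrow> Rel P CC MM \<beta> b (TApp d e) (TApp d' e'))" by (simp only: Rel.simps)
      then show "Rel P CC MM \<alpha> b (TApp d e) (TApp d' e')" using rel_a[OF e] e lexle_refl by blast
    qed
    moreover have "TApp d e \<in> U P b" "TApp d' e' \<in> U P b" using d e U_App by auto
    ultimately show "ext_eq P (wf_val P) b (TApp d e) (TApp d' e')" using Fn.IH(2) by blast
  qed
  have B: "Rel P CC MM \<alpha> (Fn a b) x y'"
    if u: "x \<in> U P (Fn a b)" "y \<in> U P (Fn a b)" "x' \<in> U P (Fn a b)" "y' \<in> U P (Fn a b)"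
    and r: "Rel P CC MM \<alpha> (Fn a b) x y" "Rel P CC MM \<alpha> (Fn a b) x' y'"
    and x: "ext_eq P (wf_val P) (Fn a b) x x'" "ext_eq P (wf_val P) (Fn a b) y y'" for \<alpha> x y x' y'
  proof (simp only: Rel.simps, intro allI impI ballI)
    fix \<beta> e e' assume be: "lexle \<beta> \<alpha>" "e \<in> U P a" "e' \<in> U P a" "Rel P CC MM \<beta> a e e'"
    have r1: "Rel P CC MM \<beta> b (TApp x e) (TApp y e')" using r(1) be by (simp only: Rel.simps)
    have r2: "Rel P CC MM \<beta> b (TApp x' e) (TApp y' e')" using r(2) be by (simp only: Rel.simps)
    have x1: "ext_eq P (wf_val P) b (TApp x e) (TApp x' e)" using x(1) refl_a[OF be(2)] be(2) by simp
    have x2: "ext_eq P (wf_val P) b (TApp y e') (TApp y' e')" using x(2) refl_a[OF be(3)] be(3) by simp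
    have "TApp x e \<in> U P b" "TApp y e' \<in> U P b" "TApp x' e \<in> U P b" "TApp y' e' \<in> U P b"
      using u be U_App by auto
    then show "Rel P CC MM \<beta> b (TApp x e) (TApp y' e')" using Fn.IH(2) r1 r2 x1 x2 by blast
  qed
  show ?case using A B by blast
qed

lemma ext_main: "extensional P (wf_val P)"
  unfolding extensional_def using final fund by blast


end


theorem theorem2:
  assumes "wf_program P" and "stratified P"
  shows "extensional P (wf_val P)"
proof -
  obtain st where "strat_ok P st" using stratified_ok[OF assms(2)] by blast
  then show ?thesis using ext_main[OF assms(1)] by blast
qed

end
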